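(* Let $X$ be a Banach space and $\{Y_i\}_{i\in I}$ a family of closed subspaces of $X$ satisfying the $(\ast)$-condition, with $Sz(Y_i)\le\omega^\alpha$ for all $i\in I$ and some ordinal $\alpha$. If $\overline{\bigcup_{i\in I}Y_i}=X$, then $Sz(X)\le\omega^{\alpha+1}$.
   Context: A family $\{Y_i\}_{i\in I}$ of closed subspaces of $X$ satisfies the $(\ast)$-condition if there is a family $\{P_i\}_{i\in I}$ of linear projections on $X^\ast$ with $\ker P_i=Y_i^\perp$, $\|P_i\|\le1$, such that for every $\varepsilon>0$ there is $\delta(\varepsilon)>0$ with $\|\varphi-P_i\varphi\|<\varepsilon$ for all $i$ whenever $\|\varphi\|=1$ and $\|\varphi+P_i\varphi\|>2-\delta(\varepsilon)$. Szlenk index: for weak*-compact $K\subset X^\ast$, $s_\varepsilon(K)=\{x^\ast\in K:\ \text{every weak*-neighborhood } V\text{ of }x^\ast\text{ has }\mathrm{diam}(V\cap K)>\varepsilon\}$, iterated transfinitely with intersections at limits; $Sz_\varepsilon(K)=\min\{\alpha:s^\alpha_\varepsilon(K)=\emptyset\}$ or $\infty$; $Sz(K)=\sup_\varepsilon Sz_\varepsilon(K)$; $Sz(X)=Sz(B_{X^\ast})$. *)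

theory Defs
  imports "HOL-Analysis.Analysis"
begin

definition dual_sp :: "'a::real_normed_vector set \<Rightarrow> ('a \<Rightarrow> real) set" where
  "dual_sp S = {f. (\<forall>x\<in>S. \<forall>y\<in>S. f (x + y) = f x + f y)
                 \<and> (\<forall>c. \<forall>x\<in>S. f (c *\<^sub>R x) = c * f x)
                 \<and> (\<exists>K. \<forall>x\<in>S. \<bar>f x\<bar> \<le> K * norm x)
                 \<and> (\<forall>x. x \<notin> S \<longrightarrow> f x = 0)}"

definition dnorm :: "'a::real_normed_vector set \<Rightarrow> ('a \<Rightarrow> real) \<Rightarrow> real" where
  "dnorm S f = (SUP x\<in>{x\<in>S. norm x \<le> 1}. \<bar>f x\<bar>)"

definition dual_ball :: "'a::real_normed_vector set \<Rightarrow> ('a \<Rightarrow> real) set" where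
  "dual_ball S = {f \<in> dual_sp S. dnorm S f \<le> 1}"

definition weak_star :: "'a::real_normed_vector set \<Rightarrow> ('a \<Rightarrow> real) topology" where
  "weak_star S = topology_generated_by {{g. g x \<in> U} | x U. x \<in> S \<and> open U}"

definition szlenk_deriv :: "'a::real_normed_vector set \<Rightarrow> real \<Rightarrow> ('a \<Rightarrow> real) set \<Rightarrow> ('a \<Rightarrow> real) set" where
  "szlenk_deriv S \<epsilon> K = {f \<in> K. \<forall>V. (\<exists>U. openin (weak_star S) U \<and> f \<in> U \<and> U \<subseteq> V)
       \<longrightarrow> (\<exists>g\<in>V \<inter> K. \<exists>h\<in>V \<inter> K. dnorm S (\<lambda>x. g x - h x) > \<epsilon>)}"

text \<open>Transfinite iteration along a well-order r (standing for the ordinal type of r):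
  D a is the derived set s_eps^gamma(K) where gamma is the order type of the initial segment below a,
  via the (equivalent, for the monotone operator s_eps) recursion
  s^gamma(K) = K \<inter> \<Inter>_{delta<gamma} s(s^delta(K)).  The last set is s^{type r}(K).
  szlenk_iter_empty S eps K r means s_eps^{type r}(K) = {}, i.e. Sz_eps(K) \<le> type r.\<close>
definition szlenk_iter_empty :: "'a::real_normed_vector set \<Rightarrow> real \<Rightarrow> ('a \<Rightarrow> real) set \<Rightarrow> 'b rel \<Rightarrow> bool" where
  "szlenk_iter_empty S \<epsilon> K r \<longleftrightarrow>
     (\<exists>D. (\<forall>a\<in>Field r. D a = K \<inter> (\<Inter>b\<in>{b. (b, a) \<in> r \<and> b \<noteq> a}. szlenk_deriv S \<epsilon> (D b)))
        \<and> K \<inter> (\<Inter>b\<in>Field r. szlenk_deriv S \<epsilon> (D b)) = {})"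

text \<open>Sz(S) \<le> type r, where Sz(S) = sup_eps Sz_eps(B_{S*}).\<close>
definition szlenk_le :: "'a::real_normed_vector set \<Rightarrow> 'b rel \<Rightarrow> bool" where
  "szlenk_le S r \<longleftrightarrow> (\<forall>\<epsilon>>0. szlenk_iter_empty S \<epsilon> (dual_ball S) r)"

definition ord_succ :: "'b rel \<Rightarrow> 'b option rel" where
  "ord_succ r = {(Some a, Some b) | a b. (a, b) \<in> r}
              \<union> {(x, None) | x. x = None \<or> (\<exists>a\<in>Field r. x = Some a)}"

text \<open>omega^alpha (Cantor normal form): finitely supported functions Field r \<rightarrow> nat,
  compared at the r-largest point where they differ.\<close>
definition omega_pow :: "'b rel \<Rightarrow> ('b \<Rightarrow> nat) rel" where
  "omega_pow r = {(f, g). (\<forall>x. x \<notin> Field r \<longrightarrow> f x = 0 \<and> g x = 0)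
       \<and> finite {x. f x \<noteq> 0} \<and> finite {x. g x \<noteq> 0}
       \<and> (f = g \<or> (\<exists>x. f x < g x \<and> (\<forall>y. (x, y) \<in> r \<and> y \<noteq> x \<longrightarrow> f y = g y)))}"

definition star_condition :: "'i set \<Rightarrow> ('i \<Rightarrow> 'a::real_normed_vector set) \<Rightarrow> bool" where
  "star_condition I Y \<longleftrightarrow>
    (\<exists>P :: 'i \<Rightarrow> ('a \<Rightarrow> real) \<Rightarrow> ('a \<Rightarrow> real).
       (\<forall>i\<in>I.
          (\<forall>\<phi>\<in>dual_sp UNIV. P i \<phi> \<in> dual_sp UNIV)
        \<and> (\<forall>\<phi>\<in>dual_sp UNIV. \<forall>\<psi>\<in>dual_sp UNIV. P i (\<lambda>x. \<phi> x + \<psi> x) = (\<lambda>x. P i \<phi> x + P i \<psi> x))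
        \<and> (\<forall>c. \<forall>\<phi>\<in>dual_sp UNIV. P i (\<lambda>x. c * \<phi> x) = (\<lambda>x. c * P i \<phi> x))
        \<and> (\<forall>\<phi>\<in>dual_sp UNIV. P i (P i \<phi>) = P i \<phi>)
        \<and> {\<phi>\<in>dual_sp UNIV. P i \<phi> = (\<lambda>x. 0)} = {\<phi>\<in>dual_sp UNIV. \<forall>y\<in>Y i. \<phi> y = 0}
        \<and> (\<forall>\<phi>\<in>dual_sp UNIV. dnorm UNIV (P i \<phi>) \<le> dnorm UNIV \<phi>))
     \<and> (\<forall>\<epsilon>>0. \<exists>\<delta>>0. \<forall>i\<in>I. \<forall>\<phi>\<in>dual_sp UNIV.
          dnorm UNIV \<phi> = 1 \<and> dnorm UNIV (\<lambda>x. \<phi> x + P i \<phi> x) > 2 - \<delta>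
            \<longrightarrow> dnorm UNIV (\<lambda>x. \<phi> x - P i \<phi> x) < \<epsilon>))"

end

theory Submission
  imports Defs
begin

lemma HB_ext:
  fixes f :: "'a::real_normed_vector \<Rightarrow> real"
  assumes Y: "subspace Y"
    and add: "\<forall>x\<in>Y. \<forall>y\<in>Y. f (x + y) = f x + f y"
    and hom: "\<forall>x\<in>Y. \<forall>c. f (c *\<^sub>R x) = c * f x"
    and bd: "\<forall>x\<in>Y. \<bar>f x\<bar> \<le> C * norm x"
    and C: "C \<ge> 0"
  shows "\<exists>F. (\<forall>x y. F (x + y) = F x + F y) \<and> (\<forall>c x. F (c *\<^sub>R x) = c * F x)
            \<and> (\<forall>x\<in>Y. F x = f x) \<and> (\<forall>x. \<bar>F x\<bar> \<le> C * norm x)"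
proof -
  define A where "A = {G :: ('a \<times> real) set. (\<forall>x a b. (x,a)\<in>G \<longrightarrow> (x,b)\<in>G \<longrightarrow> a = b)
      \<and> (\<forall>y\<in>Y. (y, f y) \<in> G)
      \<and> (\<forall>x a z b. (x,a)\<in>G \<longrightarrow> (z,b)\<in>G \<longrightarrow> (x+z, a+b)\<in>G)
      \<and> (\<forall>x a c. (x,a)\<in>G \<longrightarrow> (c *\<^sub>R x, c*a)\<in>G)
      \<and> (\<forall>x a. (x,a)\<in>G \<longrightarrow> a \<le> C * norm x)}"
  define G0 where "G0 = {(y, f y) | y. y \<in> Y}"
  have G0A: "G0 \<in> A"
  proof -
    have 1: "(x+z, a+b) \<in> G0" if "(x,a) \<in> G0" "(z,b) \<in> G0" for x a z b
    proof -
      have "x \<in> Y" "z \<in> Y" "a = f x" "b = f z" using that unfolding G0_def by auto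
      then show ?thesis unfolding G0_def using add subspace_add[OF Y] by force
    qed
    have 2: "(c *\<^sub>R x, c*a) \<in> G0" if "(x,a) \<in> G0" for x a c
    proof -
      have "x \<in> Y" "a = f x" using that unfolding G0_def by auto
      then show ?thesis unfolding G0_def using hom subspace_scale[OF Y] by force
    qed
    have 3: "a \<le> C * norm x" if "(x,a) \<in> G0" for x a
      using that bd unfolding G0_def by force
    have 4: "a = b" if "(x,a) \<in> G0" "(x,b) \<in> G0" for x a b
      using that unfolding G0_def by auto
    have 5: "(y, f y) \<in> G0" if "y \<in> Y" for y using that unfolding G0_def by auto
    show ?thesis unfolding A_def using 1 2 3 4 5 by blast
  qed
  have "\<forall>C\<in>chains A. \<exists>U\<in>A. \<forall>X\<in>C. X \<subseteq> U"
  proof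
    fix Ch assume Ch: "Ch \<in> chains A"
    show "\<exists>U\<in>A. \<forall>X\<in>Ch. X \<subseteq> U"
    proof (cases "Ch = {}")
      case True then show ?thesis using G0A by blast
    next
      case False
      have sub: "Ch \<subseteq> A" using Ch chainsD2 by blast
      have cmp: "\<And>X Z. X \<in> Ch \<Longrightarrow> Z \<in> Ch \<Longrightarrow> X \<subseteq> Z \<or> Z \<subseteq> X" using Ch chainsD by blast
      have Cf: "\<And>X x a b. X \<in> Ch \<Longrightarrow> (x,a)\<in>X \<Longrightarrow> (x,b)\<in>X \<Longrightarrow> a = b"
        and CY: "\<And>X y. X \<in> Ch \<Longrightarrow> y\<in>Y \<Longrightarrow> (y, f y) \<in> X"
        and Cadd: "\<And>X x a z b. X \<in> Ch \<Longrightarrow> (x,a)\<in>X \<Longrightarrow> (z,b)\<in>X \<Longrightarrow> (x+z, a+b)\<in>X"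
        and Csc: "\<And>X x a c. X \<in> Ch \<Longrightarrow> (x,a)\<in>X \<Longrightarrow> (c *\<^sub>R x, c*a)\<in>X"
        and Cbd: "\<And>X x a. X \<in> Ch \<Longrightarrow> (x,a)\<in>X \<Longrightarrow> a \<le> C * norm x"
        using sub unfolding A_def by blast+
      have u1: "a = b" if hh: "(x,a) \<in> \<Union>Ch" "(x,b) \<in> \<Union>Ch" for x a b
      proof -
        obtain X Z where XZ: "X \<in> Ch" "Z \<in> Ch" "(x,a)\<in>X" "(x,b)\<in>Z" using hh by blast
        show ?thesis
        proof (cases "X \<subseteq> Z")
          case True then show ?thesis using Cf[OF XZ(2) _ XZ(4)] XZ(3) by blast
        next
          case False then have "Z \<subseteq> X" using cmp XZ by blast
          then show ?thesis using Cf[OF XZ(1) XZ(3)] XZ(4) by blast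
        qed
      qed
      have u2: "(y, f y) \<in> \<Union>Ch" if "y \<in> Y" for y
      proof -
        obtain X where "X \<in> Ch" using False by blast
        then show ?thesis using CY that by blast
      qed
      have u3: "(x+z, a+b) \<in> \<Union>Ch" if hh: "(x,a) \<in> \<Union>Ch" "(z,b) \<in> \<Union>Ch" for x a z b
      proof -
        obtain X Z where XZ: "X \<in> Ch" "Z \<in> Ch" "(x,a)\<in>X" "(z,b)\<in>Z" using hh by blast
        show ?thesis
        proof (cases "X \<subseteq> Z")
          case True
          then have "(x+z,a+b) \<in> Z" using Cadd[OF XZ(2) _ XZ(4)] XZ(3) by blast
          then show ?thesis using XZ by blast
        next
          case False
          then have "Z \<subseteq> X" using cmp XZ by blast
          then have "(x+z,a+b) \<in> X" using Cadd[OF XZ(1) XZ(3)] XZ(4) by blast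
          then show ?thesis using XZ by blast
        qed
      qed
      have u4: "(c *\<^sub>R x, c*a) \<in> \<Union>Ch" if "(x,a) \<in> \<Union>Ch" for x a c
        using that Csc by blast
      have u5: "a \<le> C * norm x" if "(x,a) \<in> \<Union>Ch" for x a
        using that Cbd by blast
      have "\<Union>Ch \<in> A" unfolding A_def using u1 u2 u3 u4 u5 by blast
      then show ?thesis by blast
    qed
  qed
  from Zorn_Lemma2[OF this] obtain M where MA: "M \<in> A" and Mmax: "\<forall>X\<in>A. M \<subseteq> X \<longrightarrow> X = M" by blast
  have Mfun: "\<And>x a b. (x,a)\<in>M \<Longrightarrow> (x,b)\<in>M \<Longrightarrow> a = b"
    and MY: "\<And>y. y\<in>Y \<Longrightarrow> (y, f y) \<in> M"
    and Madd: "\<And>x a z b. (x,a)\<in>M \<Longrightarrow> (z,b)\<in>M \<Longrightarrow> (x+z, a+b)\<in>M"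
    and Msc: "\<And>x a c. (x,a)\<in>M \<Longrightarrow> (c *\<^sub>R x, c*a)\<in>M"
    and Mbd: "\<And>x a. (x,a)\<in>M \<Longrightarrow> a \<le> C * norm x"
    using MA unfolding A_def by blast+
  have M0: "(0, 0) \<in> M" using MY[OF subspace_0[OF Y]] Msc[of 0 "f 0" 0] by simp
  have tot: "\<exists>a. (x,a) \<in> M" for x
  proof (rule ccontr)
    assume nx: "\<not> (\<exists>a. (x,a) \<in> M)"
    define L where "L = {- C * norm (- u - x) - a | u a. (u,a) \<in> M}"
    define v where "v = Sup L"
    have key: "l \<le> C * norm (w + x) - b" if lw: "l \<in> L" "(w,b) \<in> M" for l w b
    proof -
      obtain u a where ua: "(u,a)\<in>M" "l = - C * norm (- u - x) - a" using lw L_def by blast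
      have "(w + (-1) *\<^sub>R u, b + (-1) * a) \<in> M" using Madd[OF lw(2) Msc[OF ua(1)]] .
      then have "b - a \<le> C * norm (w - u)" using Mbd by fastforce
      also have "norm (w - u) \<le> norm (w + x) + norm (- u - x)"
        using norm_triangle_ineq[of "w + x" "- u - x"] by (simp add: algebra_simps)
      then have "C * norm (w - u) \<le> C * norm (w + x) + C * norm (- u - x)"
        using C by (metis distrib_left mult_left_mono)
      finally show ?thesis using ua by simp
    qed
    have Lne: "L \<noteq> {}" using M0 L_def by blast
    have Lbdd: "bdd_above L" using key[OF _ M0] by (intro bdd_aboveI[where M="C * norm x"]) simp
    have vup: "v \<le> C * norm (w + x) - b" if "(w,b)\<in>M" for w b
      unfolding v_def using key[OF _ that] Lne by (intro cSup_least) auto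
    have vlow: "- C * norm (- u - x) - a \<le> v" if "(u,a)\<in>M" for u a
      unfolding v_def using that Lbdd by (intro cSup_upper) (auto simp: L_def)
    define G' where "G' = {(z + t *\<^sub>R x, a + t * v) | z a t. (z,a) \<in> M}"
    have G'A: "G' \<in> A"
      unfolding A_def
    proof (intro CollectI conjI allI impI ballI)
      fix y a b assume "(y,a) \<in> G'" "(y,b) \<in> G'"
      then obtain z1 a1 t1 z2 a2 t2 where h: "(z1,a1)\<in>M" "(z2,a2)\<in>M" "y = z1 + t1 *\<^sub>R x" "a = a1 + t1 * v"
        "y = z2 + t2 *\<^sub>R x" "b = a2 + t2 * v" unfolding G'_def by blast
      have "t1 = t2"
      proof (rule ccontr)
        assume ne: "t1 \<noteq> t2"
        have "(z2 + (-1) *\<^sub>R z1, a2 + (-1) * a1) \<in> M" using Madd[OF h(2) Msc[OF h(1)]] .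
        from Msc[OF this, of "1/(t1 - t2)"]
        have "((1/(t1 - t2)) *\<^sub>R (z2 + (-1) *\<^sub>R z1), (1/(t1-t2)) * (a2 + (-1) * a1)) \<in> M" .
        moreover have "(1/(t1 - t2)) *\<^sub>R (z2 + (-1) *\<^sub>R z1) = x"
        proof -
          have "z2 - z1 = (t1 - t2) *\<^sub>R x" using h(3,5) by (simp add: algebra_simps)
          then show ?thesis using ne by simp
        qed
        ultimately show False using nx by auto
      qed
      then have "z1 = z2" using h by simp
      then have "a1 = a2" using Mfun h by blast
      then show "a = b" using h \<open>t1 = t2\<close> by simp
    next
      fix y assume "y \<in> Y"
      then show "(y, f y) \<in> G'" unfolding G'_def using MY by force
    next
      fix y a z b assume "(y,a) \<in> G'" "(z,b) \<in> G'"
      then obtain z1 a1 t1 z2 a2 t2 where h: "(z1,a1)\<in>M" "(z2,a2)\<in>M" "y = z1 + t1 *\<^sub>R x" "a = a1 + t1 * v"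
        "z = z2 + t2 *\<^sub>R x" "b = a2 + t2 * v" unfolding G'_def by blast
      have "y + z = (z1 + z2) + (t1 + t2) *\<^sub>R x" "a + b = (a1 + a2) + (t1 + t2) * v"
        using h by (simp_all add: algebra_simps)
      then show "(y + z, a + b) \<in> G'" unfolding G'_def using Madd[OF h(1,2)] by blast
    next
      fix y a c assume "(y,a) \<in> G'"
      then obtain z1 a1 t1 where h: "(z1,a1)\<in>M" "y = z1 + t1 *\<^sub>R x" "a = a1 + t1 * v"
        unfolding G'_def by blast
      have "c *\<^sub>R y = c *\<^sub>R z1 + (c * t1) *\<^sub>R x" "c * a = c * a1 + (c * t1) * v"
        using h by (simp_all add: algebra_simps)
      then show "(c *\<^sub>R y, c * a) \<in> G'" unfolding G'_def using Msc[OF h(1)] by blast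
    next
      fix y a assume "(y,a) \<in> G'"
      then obtain z a1 t where h: "(z,a1)\<in>M" "y = z + t *\<^sub>R x" "a = a1 + t * v"
        unfolding G'_def by blast
      consider "t = 0" | "t > 0" | "t < 0" by linarith
      then show "a \<le> C * norm y"
      proof cases
        case 1 then show ?thesis using h Mbd by simp
      next
        case 2
        have m: "((1/t) *\<^sub>R z, (1/t) * a1) \<in> M" using Msc[OF h(1)] .
        have "v \<le> C * norm ((1/t) *\<^sub>R z + x) - (1/t) * a1" using vup[OF m] .
        then have "t * v \<le> t * (C * norm ((1/t) *\<^sub>R z + x) - (1/t) * a1)"
          using 2 by (simp add: mult_left_mono)
        also have "\<dots> = C * (t * norm ((1/t) *\<^sub>R z + x)) - a1" using 2 by (simp add: algebra_simps)
        also have "t * norm ((1/t) *\<^sub>R z + x) = norm y"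
        proof -
          have "y = t *\<^sub>R ((1/t) *\<^sub>R z + x)" using h 2 by (simp add: algebra_simps)
          then show ?thesis using 2 by simp
        qed
        finally show ?thesis using h by simp
      next
        case 3
        define s where "s = - t"
        have s: "s > 0" using 3 s_def by simp
        have m: "((-1/s) *\<^sub>R z, (-1/s) * a1) \<in> M" using Msc[OF h(1)] .
        have "- C * norm (- ((-1/s) *\<^sub>R z) - x) - (-1/s) * a1 \<le> v" using vlow[OF m] .
        moreover have "- ((-1/s) *\<^sub>R z) - x = (1/s) *\<^sub>R y"
          using h s s_def by (simp add: algebra_simps)
        ultimately have "- C * ((1/s) * norm y) + (1/s) * a1 \<le> v" using s by simp
        then have "s * (- C * ((1/s) * norm y) + (1/s) * a1) \<le> s * v" using s by (simp add: mult_left_mono)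
        then have "- C * norm y + a1 \<le> s * v" using s by (simp add: algebra_simps)
        then show ?thesis using h s_def by simp
      qed
    qed
    have "M \<subseteq> G'" unfolding G'_def by force
    then have "G' = M" using Mmax G'A by blast
    moreover have "(x, v) \<in> G'" unfolding G'_def using M0 by force
    ultimately show False using nx by blast
  qed
  define F where "F y = (THE a. (y,a) \<in> M)" for y
  have FM: "(y, F y) \<in> M" for y
    unfolding F_def using tot[of y] Mfun by (metis theI)
  have Feq: "(y, a) \<in> M \<Longrightarrow> F y = a" for y a using FM Mfun by blast
  show ?thesis
  proof (intro exI[of _ F] conjI allI ballI)
    fix x y show "F (x + y) = F x + F y" using Feq[OF Madd[OF FM FM]] .
  next
    fix c x show "F (c *\<^sub>R x) = c * F x" using Feq[OF Msc[OF FM]] .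
  next
    fix y assume "y \<in> Y" then show "F y = f y" using Feq MY by blast
  next
    fix x
    have "F x \<le> C * norm x" using Mbd[OF FM] .
    moreover have "- F x \<le> C * norm x" using Mbd[OF Msc[OF FM[of x], of "-1"]] by simp
    ultimately show "\<bar>F x\<bar> \<le> C * norm x" by linarith
  qed
qed

definition bnd :: "'a::real_normed_vector set \<Rightarrow> ('a \<Rightarrow> real) \<Rightarrow> bool" where
  "bnd S f \<longleftrightarrow> (\<exists>K. \<forall>x\<in>S. \<bar>f x\<bar> \<le> K * norm x)"

lemma bnd_bdd: "bnd S f \<Longrightarrow> bdd_above ((\<lambda>x. \<bar>f x\<bar>) ` {x\<in>S. norm x \<le> 1})"
proof -
  assume "bnd S f"
  then obtain K where K: "\<forall>x\<in>S. \<bar>f x\<bar> \<le> K * norm x" unfolding bnd_def by blast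
  have "\<bar>f x\<bar> \<le> \<bar>K\<bar>" if "x \<in> S" "norm x \<le> 1" for x
  proof -
    have "\<bar>f x\<bar> \<le> K * norm x" using K that by blast
    also have "\<dots> \<le> \<bar>K\<bar> * norm x" by (simp add: mult_right_mono)
    also have "\<dots> \<le> \<bar>K\<bar>" using that(2) by (simp add: mult_left_le)
    finally show ?thesis .
  qed
  then show ?thesis by (intro bdd_aboveI2[where M="\<bar>K\<bar>"]) auto
qed

lemma dnorm_upper: "bnd S f \<Longrightarrow> x \<in> S \<Longrightarrow> norm x \<le> 1 \<Longrightarrow> \<bar>f x\<bar> \<le> dnorm S f"
  unfolding dnorm_def by (rule cSUP_upper) (auto simp: bnd_bdd)

lemma dnorm_least: "0 \<in> S \<Longrightarrow> (\<And>x. x \<in> S \<Longrightarrow> norm x \<le> 1 \<Longrightarrow> \<bar>f x\<bar> \<le> M) \<Longrightarrow> dnorm S f \<le> M"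
  unfolding dnorm_def by (rule cSUP_least) auto

lemma dnorm_nonneg: "bnd S f \<Longrightarrow> 0 \<in> S \<Longrightarrow> 0 \<le> dnorm S f"
  using dnorm_upper[of S f 0] by simp

lemma dnorm_cong: "(\<And>x. x \<in> S \<Longrightarrow> f x = g x) \<Longrightarrow> dnorm S f = dnorm S g"
  unfolding dnorm_def by (auto intro!: SUP_cong)

lemma dnorm_gt: "bnd S f \<Longrightarrow> 0 \<in> S \<Longrightarrow> dnorm S f > c \<Longrightarrow> \<exists>x\<in>S. norm x \<le> 1 \<and> \<bar>f x\<bar> > c"
  using dnorm_least[of S f c] by force

lemma bnd_add: "bnd S f \<Longrightarrow> bnd S g \<Longrightarrow> bnd S (\<lambda>x. f x + g x)"
proof -
  assume "bnd S f" "bnd S g"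
  then obtain K1 K2 where "\<forall>x\<in>S. \<bar>f x\<bar> \<le> K1 * norm x" "\<forall>x\<in>S. \<bar>g x\<bar> \<le> K2 * norm x"
    unfolding bnd_def by blast
  then have "\<forall>x\<in>S. \<bar>f x + g x\<bar> \<le> (K1 + K2) * norm x"
    by (auto simp: distrib_right intro!: order_trans[OF abs_triangle_ineq] add_mono)
  then show ?thesis unfolding bnd_def by blast
qed

lemma bnd_scale: "bnd S f \<Longrightarrow> bnd S (\<lambda>x. c * f x)"
proof -
  assume "bnd S f"
  then obtain K where K: "\<forall>x\<in>S. \<bar>f x\<bar> \<le> K * norm x" unfolding bnd_def by blast
  have "\<forall>x\<in>S. \<bar>c * f x\<bar> \<le> (\<bar>c\<bar> * K) * norm x"
    using K by (simp add: abs_mult mult.assoc mult_left_mono)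
  then show ?thesis unfolding bnd_def by blast
qed

lemma bnd_diff: "bnd S f \<Longrightarrow> bnd S g \<Longrightarrow> bnd S (\<lambda>x. f x - g x)"
  using bnd_add[of S f "\<lambda>x. (-1) * g x"] bnd_scale[of S g "-1"] by simp

lemma bnd_subset: "bnd T f \<Longrightarrow> S \<subseteq> T \<Longrightarrow> bnd S f"
  unfolding bnd_def by blast

lemma bnd_dual: "f \<in> dual_sp T \<Longrightarrow> S \<subseteq> T \<Longrightarrow> bnd S f"
  unfolding dual_sp_def bnd_def by blast

lemma dnorm_subset: "bnd T f \<Longrightarrow> S \<subseteq> T \<Longrightarrow> 0 \<in> S \<Longrightarrow> dnorm S f \<le> dnorm T f"
  by (rule dnorm_least) (auto intro: dnorm_upper)

lemma dnorm_bound: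
  assumes "bnd S f" "subspace S" "\<And>x c. x \<in> S \<Longrightarrow> f (c *\<^sub>R x) = c * f x" "x \<in> S"
  shows "\<bar>f x\<bar> \<le> dnorm S f * norm x"
proof (cases "x = 0")
  case True
  then show ?thesis using assms(3)[of 0 0] subspace_0[OF assms(2)] by simp
next
  case False
  let ?y = "(1 / norm x) *\<^sub>R x"
  have "?y \<in> S" using assms subspace_scale by blast
  moreover have "norm ?y \<le> 1" using False by simp
  ultimately have "\<bar>f ?y\<bar> \<le> dnorm S f" using assms(1) dnorm_upper by blast
  moreover have "f ?y = f x / norm x" using assms(3)[OF assms(4)] by simp
  ultimately have "\<bar>f x\<bar> / norm x \<le> dnorm S f" by simp
  then show ?thesis using False by (simp add: divide_le_eq)
qed

lemma dnorm_scale_le: "bnd S f \<Longrightarrow> 0 \<in> S \<Longrightarrow> dnorm S (\<lambda>x. c * f x) \<le> \<bar>c\<bar> * dnorm S f"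
  by (rule dnorm_least) (auto simp: abs_mult intro!: mult_left_mono dnorm_upper)

lemma dnorm_scale:
  assumes "bnd S f" "0 \<in> S"
  shows "dnorm S (\<lambda>x. c * f x) = \<bar>c\<bar> * dnorm S f"
proof (cases "c = 0")
  case True
  have "dnorm S (\<lambda>x. c * f x) \<le> 0" using dnorm_scale_le[OF assms, of c] True by simp
  moreover have "0 \<le> dnorm S (\<lambda>x. c * f x)" using dnorm_nonneg[OF bnd_scale[OF assms(1)] assms(2)] .
  ultimately show ?thesis using True by simp
next
  case False
  have "dnorm S f = dnorm S (\<lambda>x. (1/c) * (c * f x))" using False by simp
  also have "\<dots> \<le> \<bar>1/c\<bar> * dnorm S (\<lambda>x. c * f x)"
    using dnorm_scale_le[OF bnd_scale[OF assms(1)] assms(2), of "1/c" c] .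
  finally have "\<bar>c\<bar> * dnorm S f \<le> dnorm S (\<lambda>x. c * f x)"
    using False by (simp add: field_simps)
  then show ?thesis using dnorm_scale_le[OF assms, of c] by simp
qed

lemma dnorm_add: "bnd S f \<Longrightarrow> bnd S g \<Longrightarrow> 0 \<in> S \<Longrightarrow> dnorm S (\<lambda>x. f x + g x) \<le> dnorm S f + dnorm S g"
  by (rule dnorm_least) (auto intro!: order_trans[OF abs_triangle_ineq] add_mono dnorm_upper)

lemma dnorm_diff: "bnd S f \<Longrightarrow> bnd S g \<Longrightarrow> 0 \<in> S \<Longrightarrow> dnorm S (\<lambda>x. f x - g x) \<le> dnorm S f + dnorm S g"
  by (rule dnorm_least) (auto intro!: order_trans[OF abs_triangle_ineq4] add_mono dnorm_upper)

lemma dual_hom: "f \<in> dual_sp UNIV \<Longrightarrow> f (c *\<^sub>R x) = c * f x"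
  unfolding dual_sp_def by blast

lemma dual_addD: "f \<in> dual_sp UNIV \<Longrightarrow> f (x + y) = f x + f y"
  unfolding dual_sp_def by blast

lemma dual_add: "f \<in> dual_sp UNIV \<Longrightarrow> g \<in> dual_sp UNIV \<Longrightarrow> (\<lambda>x. f x + g x) \<in> dual_sp UNIV"
proof -
  assume f: "f \<in> dual_sp UNIV" and g: "g \<in> dual_sp UNIV"
  have "bnd UNIV (\<lambda>x. f x + g x)" using bnd_add bnd_dual f g by blast
  then show ?thesis using dual_addD[OF f] dual_addD[OF g] dual_hom[OF f] dual_hom[OF g]
    unfolding dual_sp_def bnd_def by (simp add: algebra_simps)
qed

lemma dual_scale: "f \<in> dual_sp UNIV \<Longrightarrow> (\<lambda>x. c * f x) \<in> dual_sp UNIV"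
proof -
  assume f: "f \<in> dual_sp UNIV"
  have "bnd UNIV (\<lambda>x. c * f x)" using bnd_scale bnd_dual f by blast
  then show ?thesis using dual_addD[OF f] dual_hom[OF f]
    unfolding dual_sp_def bnd_def by (simp add: algebra_simps)
qed

lemma dual_diff: "f \<in> dual_sp UNIV \<Longrightarrow> g \<in> dual_sp UNIV \<Longrightarrow> (\<lambda>x. f x - g x) \<in> dual_sp UNIV"
  using dual_add[of f "\<lambda>x. (-1) * g x"] dual_scale[of g "-1"] by simp

definition res :: "'a set \<Rightarrow> ('a \<Rightarrow> real) \<Rightarrow> ('a \<Rightarrow> real)" where
  "res Y f = (\<lambda>x. if x \<in> Y then f x else 0)"

lemma res_dual: "f \<in> dual_sp UNIV \<Longrightarrow> subspace Y \<Longrightarrow> res Y f \<in> dual_sp Y"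
proof -
  assume f: "f \<in> dual_sp UNIV" and Y: "subspace Y"
  obtain K where K: "\<forall>x. \<bar>f x\<bar> \<le> K * norm x" using f unfolding dual_sp_def by blast
  have 1: "\<forall>x\<in>Y. \<forall>y\<in>Y. res Y f (x + y) = res Y f x + res Y f y"
    using subspace_add[OF Y] dual_addD[OF f] by (simp add: res_def)
  have 2: "\<forall>c. \<forall>x\<in>Y. res Y f (c *\<^sub>R x) = c * res Y f x"
    using subspace_scale[OF Y] dual_hom[OF f] by (simp add: res_def)
  have 3: "\<forall>x\<in>Y. \<bar>res Y f x\<bar> \<le> K * norm x" using K by (simp add: res_def)
  have 4: "\<forall>x. x \<notin> Y \<longrightarrow> res Y f x = 0" by (simp add: res_def)
  show ?thesis unfolding dual_sp_def using 1 2 3 4 by blast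
qed

lemma dnorm_res: "dnorm Y (res Y f) = dnorm Y f"
  by (rule dnorm_cong) (simp add: res_def)

lemma ws_basic: "x \<in> S \<Longrightarrow> open A \<Longrightarrow> openin (weak_star S) {g. g x \<in> A}"
  unfolding weak_star_def by (rule topology_generated_by_Basis) blast

lemma ws_res:
  assumes "openin (weak_star Y) U"
  shows "openin (weak_star UNIV) {\<psi>. res Y \<psi> \<in> U}"
proof -
  have "generate_topology_on {{g. g x \<in> U} | x U. x \<in> Y \<and> open U} U"
    using assms unfolding weak_star_def openin_topology_generated_by_iff .
  then have "generate_topology_on {{g. g x \<in> U} | x U. x \<in> (UNIV::'a set) \<and> open U} {\<psi>. res Y \<psi> \<in> U}"
  proof (induction rule: generate_topology_on.induct)
    case Empty
    then show ?case by (simp add: generate_topology_on.Empty)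
  next
    case (Int a b)
    have "{\<psi>. res Y \<psi> \<in> a \<inter> b} = {\<psi>. res Y \<psi> \<in> a} \<inter> {\<psi>. res Y \<psi> \<in> b}" by blast
    then show ?case using Int by (simp add: generate_topology_on.Int)
  next
    case (UN K)
    have "{\<psi>. res Y \<psi> \<in> \<Union>K} = \<Union>((\<lambda>k. {\<psi>. res Y \<psi> \<in> k}) ` K)" by blast
    then show ?case using UN by (auto intro!: generate_topology_on.UN)
  next
    case (Basis s)
    then obtain x A where xA: "s = {g. g x \<in> A}" "x \<in> Y" "open A" by blast
    then have "{\<psi>. res Y \<psi> \<in> s} = {g. g x \<in> A}" by (simp add: res_def)
    then show ?case using xA by (auto intro!: generate_topology_on.Basis)
  qed
  then show ?thesis unfolding weak_star_def openin_topology_generated_by_iff .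
qed

lemma sd_sub: "szlenk_deriv S \<epsilon> K \<subseteq> K"
  unfolding szlenk_deriv_def by blast

lemma sd_mono: "K \<subseteq> K' \<Longrightarrow> szlenk_deriv S \<epsilon> K \<subseteq> szlenk_deriv S \<epsilon> K'"
  unfolding szlenk_deriv_def by blast

lemma iter_prefixed:
  fixes r :: "'b rel" and E :: "'b \<Rightarrow> ('a::real_normed_vector \<Rightarrow> real) set"
  assumes pre: "\<forall>a\<in>Field r. K \<inter> (\<Inter>b\<in>{b. (b, a) \<in> r \<and> b \<noteq> a}. szlenk_deriv S \<epsilon> (E b)) \<subseteq> E a"
    and fin: "K \<inter> (\<Inter>b\<in>Field r. szlenk_deriv S \<epsilon> (E b)) = {}"
  shows "szlenk_iter_empty S \<epsilon> K r"
proof -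
  define Fop where "Fop D = (\<lambda>a. K \<inter> (\<Inter>b\<in>{b. (b, a) \<in> r \<and> b \<noteq> a}. szlenk_deriv S \<epsilon> (D b)))"
    for D :: "'b \<Rightarrow> ('a \<Rightarrow> real) set"
  have mono: "mono Fop"
  proof (rule monoI)
    fix D D' :: "'b \<Rightarrow> ('a \<Rightarrow> real) set" assume "D \<le> D'"
    then have "\<And>b. szlenk_deriv S \<epsilon> (D b) \<subseteq> szlenk_deriv S \<epsilon> (D' b)"
      using sd_mono le_funD by metis
    then show "Fop D \<le> Fop D'" unfolding Fop_def le_fun_def by blast
  qed
  define E' where "E' a = (if a \<in> Field r then E a else K)" for a
  have "Fop E' \<le> E'"
  proof (rule le_funI)
    fix a
    show "Fop E' a \<subseteq> E' a"
    proof (cases "a \<in> Field r")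
      case True
      have "\<And>b. (b, a) \<in> r \<Longrightarrow> E' b = E b" unfolding E'_def by (auto intro: FieldI1)
      then have "Fop E' a = K \<inter> (\<Inter>b\<in>{b. (b, a) \<in> r \<and> b \<noteq> a}. szlenk_deriv S \<epsilon> (E b))"
        unfolding Fop_def by auto
      then show ?thesis using pre True E'_def by simp
    next
      case False
      then show ?thesis unfolding Fop_def E'_def by auto
    qed
  qed
  then have low: "lfp Fop \<le> E'" by (rule lfp_lowerbound)
  have unf: "lfp Fop = Fop (lfp Fop)" by (rule lfp_unfold[OF mono])
  show ?thesis
    unfolding szlenk_iter_empty_def
  proof (intro exI[of _ "lfp Fop"] conjI ballI)
    fix a assume "a \<in> Field r"
    show "lfp Fop a = K \<inter> (\<Inter>b\<in>{b. (b, a) \<in> r \<and> b \<noteq> a}. szlenk_deriv S \<epsilon> (lfp Fop b))"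
      by (subst unf) (simp add: Fop_def)
  next
    have "\<And>b. b \<in> Field r \<Longrightarrow> szlenk_deriv S \<epsilon> (lfp Fop b) \<subseteq> szlenk_deriv S \<epsilon> (E b)"
      using low sd_mono le_funD E'_def by metis
    then show "K \<inter> (\<Inter>b\<in>Field r. szlenk_deriv S \<epsilon> (lfp Fop b)) = {}" using fin by blast
  qed
qed

lemma omega_mem: "(f, g) \<in> omega_pow r \<longleftrightarrow> (\<forall>x. x \<notin> Field r \<longrightarrow> f x = 0 \<and> g x = 0)
       \<and> finite {x. f x \<noteq> 0} \<and> finite {x. g x \<noteq> 0}
       \<and> (f = g \<or> (\<exists>x. f x < g x \<and> (\<forall>y. (x, y) \<in> r \<and> y \<noteq> x \<longrightarrow> f y = g y)))"
  unfolding omega_pow_def by (simp only: mem_Collect_eq case_prod_conv)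

lemma omega_field: "f \<in> Field (omega_pow r) \<Longrightarrow> (\<forall>x. x \<notin> Field r \<longrightarrow> f x = 0) \<and> finite {x. f x \<noteq> 0}"
proof -
  assume "f \<in> Field (omega_pow r)"
  then obtain g where "(f,g) \<in> omega_pow r \<or> (g,f) \<in> omega_pow r" unfolding Field_def by blast
  then show ?thesis
  proof
    assume "(f,g) \<in> omega_pow r"
    then have "(\<forall>x. x \<notin> Field r \<longrightarrow> f x = 0 \<and> g x = 0) \<and> finite {x. f x \<noteq> 0}"
      unfolding omega_mem by (elim conjE) (intro conjI)
    then show ?thesis by simp
  next
    assume "(g,f) \<in> omega_pow r"
    then have "(\<forall>x. x \<notin> Field r \<longrightarrow> g x = 0 \<and> f x = 0) \<and> finite {x. f x \<noteq> 0}"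
      unfolding omega_mem by (elim conjE) (intro conjI)
    then show ?thesis by simp
  qed
qed

lemma os_mem: "(x, y) \<in> ord_succ r \<longleftrightarrow> (\<exists>a b. x = Some a \<and> y = Some b \<and> (a, b) \<in> r) \<or> (y = None \<and> (x = None \<or> (\<exists>a\<in>Field r. x = Some a)))"
  unfolding ord_succ_def by blast

lemma omega_fieldI: "(\<forall>x. x \<notin> Field r \<longrightarrow> f x = 0) \<Longrightarrow> finite {x. f x \<noteq> 0} \<Longrightarrow> f \<in> Field (omega_pow r)"
  by (rule FieldI1[of f f]) (simp add: omega_mem)

lemma os_field_Some: "Some b \<in> Field (ord_succ r) \<Longrightarrow> b \<in> Field r"
proof -
  assume "Some b \<in> Field (ord_succ r)"
  then obtain y where "(Some b, y) \<in> ord_succ r \<or> (y, Some b) \<in> ord_succ r" unfolding Field_def by blast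
  then show ?thesis unfolding os_mem by (auto intro: FieldI1 FieldI2)
qed

lemma os_field_Some2: "b \<in> Field r \<Longrightarrow> Some b \<in> Field (ord_succ r)"
  by (rule FieldI1[of _ None]) (simp add: os_mem)

lemma os_None_top: "(None, y) \<in> ord_succ r \<Longrightarrow> y = None"
  unfolding os_mem by auto

lemma os_Some_rel: "(Some x, y) \<in> ord_succ r \<Longrightarrow> y = None \<or> (\<exists>y'. y = Some y' \<and> (x, y') \<in> r)"
  unfolding os_mem by auto

definition mk :: "nat \<Rightarrow> ('b \<Rightarrow> nat) \<Rightarrow> 'b option \<Rightarrow> nat" where
  "mk n g = (\<lambda>x. case x of None \<Rightarrow> n | Some b \<Rightarrow> g b)"

lemma mk_None[simp]: "mk n g None = n" and mk_Some[simp]: "mk n g (Some b) = g b"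
  by (simp_all add: mk_def)

lemma mk_low: "mk (f None) (\<lambda>b. f (Some b)) = f"
  by (rule ext) (simp add: mk_def split: option.split)

lemma mk_field:
  assumes "g \<in> Field (omega_pow r)"
  shows "mk n g \<in> Field (omega_pow (ord_succ r))"
proof (rule omega_fieldI)
  have g: "\<forall>x. x \<notin> Field r \<longrightarrow> g x = 0" "finite {x. g x \<noteq> 0}" using omega_field[OF assms] by auto
  show "\<forall>x. x \<notin> Field (ord_succ r) \<longrightarrow> mk n g x = 0"
  proof (intro allI impI)
    fix x assume x: "x \<notin> Field (ord_succ r)"
    have "None \<in> Field (ord_succ r)" by (rule FieldI1[of _ None]) (simp add: os_mem)
    show "mk n g x = 0"
    proof (cases x)
      case None then show ?thesis using x \<open>None \<in> Field (ord_succ r)\<close> by simp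
    next
      case (Some b)
      then have "b \<notin> Field r" using x os_field_Some2 by metis
      then show ?thesis using Some g(1) by simp
    qed
  qed
  have "{x. mk n g x \<noteq> 0} \<subseteq> insert None (Some ` {x. g x \<noteq> 0})"
  proof
    fix x assume "x \<in> {x. mk n g x \<noteq> 0}"
    then show "x \<in> insert None (Some ` {x. g x \<noteq> 0})" by (cases x) auto
  qed
  then show "finite {x. mk n g x \<noteq> 0}" using g(2) finite_subset by blast
qed

lemma low_field:
  assumes "f \<in> Field (omega_pow (ord_succ r))"
  shows "(\<lambda>b. f (Some b)) \<in> Field (omega_pow r)"
proof (rule omega_fieldI)
  have f: "\<forall>x. x \<notin> Field (ord_succ r) \<longrightarrow> f x = 0" "finite {x. f x \<noteq> 0}" using omega_field[OF assms] by auto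
  show "\<forall>x. x \<notin> Field r \<longrightarrow> f (Some x) = 0"
  proof (intro allI impI)
    fix x assume "x \<notin> Field r"
    then have "Some x \<notin> Field (ord_succ r)" using os_field_Some by metis
    then show "f (Some x) = 0" using f(1) by blast
  qed
  have e: "{x. f (Some x) \<noteq> 0} = Some -` {x. f x \<noteq> 0}" by (simp add: vimage_def)
  have "finite (Some -` {x. f x \<noteq> 0})" by (rule finite_vimageI[OF f(2)]) (simp add: inj_def)
  then show "finite {x. f (Some x) \<noteq> 0}" using e by simp
qed

lemma mk_less_top:
  assumes "g \<in> Field (omega_pow r)" "g' \<in> Field (omega_pow r)" "m < n"
  shows "(mk m g', mk n g) \<in> omega_pow (ord_succ r) \<and> mk m g' \<noteq> mk n g"
proof -
  have F: "mk m g' \<in> Field (omega_pow (ord_succ r))" "mk n g \<in> Field (omega_pow (ord_succ r))"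
    using mk_field assms by blast+
  have "(mk m g', mk n g) \<in> omega_pow (ord_succ r)"
    unfolding omega_mem
  proof (intro conjI disjI2 exI[of _ None])
    show "\<forall>y. (None, y) \<in> ord_succ r \<and> y \<noteq> None \<longrightarrow> mk m g' y = mk n g y" using os_None_top by blast
  qed (use omega_field[OF F(1)] omega_field[OF F(2)] assms(3) in auto)
  moreover have "mk m g' \<noteq> mk n g" using assms(3) by (metis mk_None less_irrefl)
  ultimately show ?thesis by blast
qed

lemma mk_less_low:
  assumes "(g', g) \<in> omega_pow r" "g' \<noteq> g"
  shows "(mk n g', mk n g) \<in> omega_pow (ord_succ r) \<and> mk n g' \<noteq> mk n g"
proof -
  have gF: "g \<in> Field (omega_pow r)" "g' \<in> Field (omega_pow r)" using assms(1) by (auto intro: FieldI1 FieldI2)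
  have F: "mk n g' \<in> Field (omega_pow (ord_succ r))" "mk n g \<in> Field (omega_pow (ord_succ r))"
    using mk_field gF by blast+
  obtain x where x: "g' x < g x" "\<forall>y. (x, y) \<in> r \<and> y \<noteq> x \<longrightarrow> g' y = g y"
  proof -
    have "g' = g \<or> (\<exists>x. g' x < g x \<and> (\<forall>y. (x, y) \<in> r \<and> y \<noteq> x \<longrightarrow> g' y = g y))"
      using assms(1) unfolding omega_mem by (elim conjE)
    then show ?thesis using assms(2) that by auto
  qed
  have "\<forall>y. (Some x, y) \<in> ord_succ r \<and> y \<noteq> Some x \<longrightarrow> mk n g' y = mk n g y"
  proof (intro allI impI)
    fix y assume "(Some x, y) \<in> ord_succ r \<and> y \<noteq> Some x"
    then show "mk n g' y = mk n g y" using os_Some_rel[of x y r] x(2) by auto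
  qed
  then have "(mk n g', mk n g) \<in> omega_pow (ord_succ r)"
    unfolding omega_mem
  proof (intro conjI disjI2 exI[of _ "Some x"])
    show "\<forall>y. (Some x, y) \<in> ord_succ r \<and> y \<noteq> Some x \<longrightarrow> mk n g' y = mk n g y" by fact
  qed (use omega_field[OF F(1)] omega_field[OF F(2)] x(1) in auto)
  moreover have "mk n g' \<noteq> mk n g" using x(1) by (metis mk_Some less_irrefl)
  ultimately show ?thesis by blast
qed

lemma density:
  fixes \<phi> :: "'a::real_normed_vector \<Rightarrow> real"
  assumes phi: "\<phi> \<in> dual_sp UNIV" and Ysub: "\<forall>i\<in>I. subspace (Y i)"
    and dense: "closure (\<Union>i\<in>I. Y i) = UNIV" and bd: "\<forall>i\<in>I. dnorm (Y i) \<phi> \<le> c"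
  shows "dnorm UNIV \<phi> \<le> c"
proof -
  have "I \<noteq> {}" using dense by auto
  then obtain i0 where "i0 \<in> I" by blast
  then have c0: "0 \<le> c" using bd dnorm_nonneg[OF bnd_dual[OF phi, of "Y i0"]] subspace_0 Ysub
    by (meson order_trans subset_UNIV)
  obtain K where K: "\<forall>x. \<bar>\<phi> x\<bar> \<le> K * norm x" using phi unfolding dual_sp_def by blast
  define K' where "K' = \<bar>K\<bar>"
  have K': "\<bar>\<phi> x\<bar> \<le> K' * norm x" for x
    using K[rule_format, of x] unfolding K'_def by (meson abs_ge_self mult_right_mono norm_ge_zero order_trans)
  show ?thesis
  proof (rule dnorm_least)
    fix x :: 'a assume x1: "norm x \<le> 1"
    show "\<bar>\<phi> x\<bar> \<le> c"
    proof (rule ccontr)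
      assume "\<not> \<bar>\<phi> x\<bar> \<le> c"
      define d where "d = \<bar>\<phi> x\<bar> - c"
      have d: "d > 0" using \<open>\<not> \<bar>\<phi> x\<bar> \<le> c\<close> d_def by simp
      define e where "e = d / (2 * (K' + c + 1))"
      have KK: "K' + c + 1 > 0" using c0 K'_def by simp
      have e: "e > 0" using d KK e_def by simp
      have ed: "e * (K' + c) < d"
      proof -
        have KK': "K' + c + 1 \<noteq> 0" using KK by simp
        have "e * (K' + c + 1) = d / 2" unfolding e_def using KK' by (simp add: field_simps)
        then show ?thesis using e d by (simp add: algebra_simps)
      qed
      have "x \<in> closure (\<Union>i\<in>I. Y i)" using dense by simp
      then obtain y where y: "y \<in> (\<Union>i\<in>I. Y i)" "dist y x < e" using e closure_approachable by blast
      then obtain i where i: "i \<in> I" "y \<in> Y i" by blast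
      have "\<bar>\<phi> y\<bar> \<le> dnorm (Y i) \<phi> * norm y"
        using dnorm_bound[OF bnd_dual[OF phi] Ysub[rule_format, OF i(1)] _ i(2)] dual_hom[OF phi] by blast
      also have "\<dots> \<le> c * norm y" using bd i(1) by (simp add: mult_right_mono)
      also have "\<dots> \<le> c * (1 + e)"
      proof -
        have "norm y \<le> norm x + dist y x" by (metis dist_commute dist_norm norm_triangle_sub add.commute)
        then have "norm y \<le> 1 + e" using x1 y(2) by simp
        then show ?thesis using c0 by (simp add: mult_left_mono)
      qed
      finally have 1: "\<bar>\<phi> y\<bar> \<le> c * (1 + e)" .
      have "\<phi> x = \<phi> y + \<phi> (x - y)" using dual_addD[OF phi, of y "x - y"] by simp
      moreover have "\<bar>\<phi> (x - y)\<bar> \<le> K' * e"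
      proof -
        have "norm (x - y) \<le> e" using y(2) by (simp add: dist_norm norm_minus_commute)
        then show ?thesis using K'[of "x - y"] K'_def
          by (meson abs_ge_zero mult_left_mono order_trans)
      qed
      ultimately have "\<bar>\<phi> x\<bar> \<le> c * (1 + e) + K' * e" using 1 by linarith
      then have "\<bar>\<phi> x\<bar> \<le> c + e * (K' + c)" by (simp add: algebra_simps)
      then show False using ed d_def by linarith
    qed
  qed simp
qed

lemma dual_ball_iff: "\<phi> \<in> dual_ball S \<longleftrightarrow> \<phi> \<in> dual_sp S \<and> dnorm S \<phi> \<le> 1"
  unfolding dual_ball_def by simp

theorem lemma3p11:
  fixes I :: "'i set" and Y :: "'i \<Rightarrow> 'a::banach set" and \<alpha> :: "'b rel"
  assumes "\<forall>i\<in>I. subspace (Y i) \<and> closed (Y i)"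
    and "star_condition I Y"
    and "Well_order \<alpha>"
    and "\<forall>i\<in>I. szlenk_le (Y i) (omega_pow \<alpha>)"
    and "closure (\<Union>i\<in>I. Y i) = UNIV"
  shows "szlenk_le (UNIV :: 'a set) (omega_pow (ord_succ \<alpha>))"
  unfolding szlenk_le_def
proof (intro allI impI)
  fix \<epsilon> :: real assume \<epsilon>: "\<epsilon> > 0"
  have Ysub: "\<And>i. i \<in> I \<Longrightarrow> subspace (Y i)" using assms(1) by blast
  have Y0: "\<And>i. i \<in> I \<Longrightarrow> 0 \<in> Y i" using Ysub subspace_0 by blast
  obtain P :: "'i \<Rightarrow> ('a \<Rightarrow> real) \<Rightarrow> ('a \<Rightarrow> real)" where
    Pall: "\<forall>i\<in>I.
          (\<forall>\<phi>\<in>dual_sp UNIV. P i \<phi> \<in> dual_sp UNIV)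
        \<and> (\<forall>\<phi>\<in>dual_sp UNIV. \<forall>\<psi>\<in>dual_sp UNIV. P i (\<lambda>x. \<phi> x + \<psi> x) = (\<lambda>x. P i \<phi> x + P i \<psi> x))
        \<and> (\<forall>c. \<forall>\<phi>\<in>dual_sp UNIV. P i (\<lambda>x. c * \<phi> x) = (\<lambda>x. c * P i \<phi> x))
        \<and> (\<forall>\<phi>\<in>dual_sp UNIV. P i (P i \<phi>) = P i \<phi>)
        \<and> {\<phi>\<in>dual_sp UNIV. P i \<phi> = (\<lambda>x. 0)} = {\<phi>\<in>dual_sp UNIV. \<forall>y\<in>Y i. \<phi> y = 0}
        \<and> (\<forall>\<phi>\<in>dual_sp UNIV. dnorm UNIV (P i \<phi>) \<le> dnorm UNIV \<phi>)"
    and Pstar: "\<forall>\<epsilon>>0. \<exists>\<delta>>0. \<forall>i\<in>I. \<forall>\<phi>\<in>dual_sp UNIV.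
          dnorm UNIV \<phi> = 1 \<and> dnorm UNIV (\<lambda>x. \<phi> x + P i \<phi> x) > 2 - \<delta>
            \<longrightarrow> dnorm UNIV (\<lambda>x. \<phi> x - P i \<phi> x) < \<epsilon>"
    using assms(2) unfolding star_condition_def by blast
  have Pc: "(\<forall>\<phi>\<in>dual_sp UNIV. P i \<phi> \<in> dual_sp UNIV)
        \<and> (\<forall>\<phi>\<in>dual_sp UNIV. \<forall>\<psi>\<in>dual_sp UNIV. P i (\<lambda>x. \<phi> x + \<psi> x) = (\<lambda>x. P i \<phi> x + P i \<psi> x))
        \<and> (\<forall>c. \<forall>\<phi>\<in>dual_sp UNIV. P i (\<lambda>x. c * \<phi> x) = (\<lambda>x. c * P i \<phi> x))
        \<and> (\<forall>\<phi>\<in>dual_sp UNIV. P i (P i \<phi>) = P i \<phi>)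
        \<and> {\<phi>\<in>dual_sp UNIV. P i \<phi> = (\<lambda>x. 0)} = {\<phi>\<in>dual_sp UNIV. \<forall>y\<in>Y i. \<phi> y = 0}
        \<and> (\<forall>\<phi>\<in>dual_sp UNIV. dnorm UNIV (P i \<phi>) \<le> dnorm UNIV \<phi>)" if "i \<in> I" for i
    using Pall that by (rule bspec)
  have Pdual: "P i \<phi> \<in> dual_sp UNIV" if "i \<in> I" "\<phi> \<in> dual_sp UNIV" for i and \<phi> :: "'a \<Rightarrow> real"
    by (rule bspec[OF conjunct1[OF Pc[OF that(1)]] that(2)])
  have Padd: "P i (\<lambda>x. \<phi> x + \<psi> x) = (\<lambda>x. P i \<phi> x + P i \<psi> x)"
    if "i \<in> I" "\<phi> \<in> dual_sp UNIV" "\<psi> \<in> dual_sp UNIV" for i and \<phi> \<psi> :: "'a \<Rightarrow> real"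
    by (rule bspec[OF bspec[OF conjunct1[OF conjunct2[OF Pc[OF that(1)]]] that(2)] that(3)])
  have Psc: "P i (\<lambda>x. c * \<phi> x) = (\<lambda>x. c * P i \<phi> x)"
    if "i \<in> I" "\<phi> \<in> dual_sp UNIV" for i c and \<phi> :: "'a \<Rightarrow> real"
    by (rule bspec[OF spec[OF conjunct1[OF conjunct2[OF conjunct2[OF Pc[OF that(1)]]]], of c] that(2)])
  have Pidem: "P i (P i \<phi>) = P i \<phi>" if "i \<in> I" "\<phi> \<in> dual_sp UNIV" for i and \<phi> :: "'a \<Rightarrow> real"
    by (rule bspec[OF conjunct1[OF conjunct2[OF conjunct2[OF conjunct2[OF Pc[OF that(1)]]]]] that(2)])
  have Pker: "{\<phi>\<in>dual_sp UNIV. P i \<phi> = (\<lambda>x. 0)} = {\<phi>\<in>dual_sp UNIV. \<forall>y\<in>Y i. \<phi> y = 0}" if "i \<in> I" for i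
    using conjunct1[OF conjunct2[OF conjunct2[OF conjunct2[OF conjunct2[OF Pc[OF that(1)]]]]]] .
  have Pnorm: "dnorm UNIV (P i \<phi>) \<le> dnorm UNIV \<phi>" if "i \<in> I" "\<phi> \<in> dual_sp UNIV" for i and \<phi> :: "'a \<Rightarrow> real"
    by (rule bspec[OF conjunct2[OF conjunct2[OF conjunct2[OF conjunct2[OF conjunct2[OF Pc[OF that(1)]]]]]] that(2)])
  obtain \<delta> where \<delta>: "\<delta> > 0" and Pst: "\<forall>i\<in>I. \<forall>\<phi>\<in>dual_sp UNIV.
          dnorm UNIV \<phi> = 1 \<and> dnorm UNIV (\<lambda>x. \<phi> x + P i \<phi> x) > 2 - \<delta>
            \<longrightarrow> dnorm UNIV (\<lambda>x. \<phi> x - P i \<phi> x) < \<epsilon> / 4"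
    using Pstar[rule_format, of "\<epsilon> / 4"] \<epsilon> by auto
  define \<delta>0 where "\<delta>0 = min (\<delta>/2) (1/2)"
  define q where "q = 1 - \<delta>0"
  have \<delta>0: "0 < \<delta>0" "\<delta>0 \<le> \<delta>/2" "\<delta>0 \<le> 1/2" using \<delta> \<delta>0_def by auto
  have q: "0 < q" "q < 1" "0 \<le> q" "q \<le> 1" using \<delta>0 q_def by auto
  have Pdiff: "\<And>i (\<phi>::'a\<Rightarrow>real) \<psi>. i \<in> I \<Longrightarrow> \<phi> \<in> dual_sp UNIV \<Longrightarrow> \<psi> \<in> dual_sp UNIV \<Longrightarrow>
      P i (\<lambda>x. \<phi> x - \<psi> x) = (\<lambda>x. P i \<phi> x - P i \<psi> x)"
  proof -
    fix i and \<phi> \<psi> :: "'a \<Rightarrow> real" assume h: "i \<in> I" "\<phi> \<in> dual_sp UNIV" "\<psi> \<in> dual_sp UNIV"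
    have "P i (\<lambda>x. \<phi> x - \<psi> x) = P i (\<lambda>x. \<phi> x + (\<lambda>x. (-1) * \<psi> x) x)" by simp
    also have "\<dots> = (\<lambda>x. P i \<phi> x + P i (\<lambda>x. (-1) * \<psi> x) x)"
      using Padd[OF h(1,2) dual_scale[OF h(3)]] .
    also have "\<dots> = (\<lambda>x. P i \<phi> x - P i \<psi> x)" using Psc[OF h(1,3), of "-1"] by simp
    finally show "P i (\<lambda>x. \<phi> x - \<psi> x) = (\<lambda>x. P i \<phi> x - P i \<psi> x)" .
  qed
  have Pperp: "\<And>i (ch::'a\<Rightarrow>real). i \<in> I \<Longrightarrow> ch \<in> dual_sp UNIV \<Longrightarrow> (\<forall>y\<in>Y i. ch y = 0) \<Longrightarrow> P i ch = (\<lambda>x. 0)"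
  proof -
    fix i and ch :: "'a \<Rightarrow> real" assume h: "i \<in> I" "ch \<in> dual_sp UNIV" "\<forall>y\<in>Y i. ch y = 0"
    then have "ch \<in> {\<phi>\<in>dual_sp UNIV. \<forall>y\<in>Y i. \<phi> y = 0}" by simp
    then have "ch \<in> {\<phi>\<in>dual_sp UNIV. P i \<phi> = (\<lambda>x. 0)}" by (simp only: Pker[OF h(1)])
    then show "P i ch = (\<lambda>x. 0)" by simp
  qed
  have PY: "\<And>i (\<phi>::'a\<Rightarrow>real) y. i \<in> I \<Longrightarrow> \<phi> \<in> dual_sp UNIV \<Longrightarrow> y \<in> Y i \<Longrightarrow> P i \<phi> y = \<phi> y"
  proof -
    fix i y and \<phi> :: "'a \<Rightarrow> real" assume h: "i \<in> I" "\<phi> \<in> dual_sp UNIV" "y \<in> Y i"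
    let ?ch = "\<lambda>x. \<phi> x - P i \<phi> x"
    have "?ch \<in> dual_sp UNIV" using dual_diff h Pdual by blast
    moreover have "P i ?ch = (\<lambda>x. 0)"
      using Pdiff[OF h(1,2) Pdual[OF h(1,2)]] Pidem[OF h(1,2)] by simp
    ultimately have "?ch \<in> {\<phi>\<in>dual_sp UNIV. P i \<phi> = (\<lambda>x. 0)}" by simp
    then have "?ch \<in> {\<phi>\<in>dual_sp UNIV. \<forall>y\<in>Y i. \<phi> y = 0}" by (simp only: Pker[OF h(1)])
    then show "P i \<phi> y = \<phi> y" using h(3) by simp
  qed
  have close: "\<And>i (\<psi>::'a\<Rightarrow>real) t0. i \<in> I \<Longrightarrow> \<psi> \<in> dual_sp UNIV \<Longrightarrow> dnorm UNIV \<psi> \<le> t0 \<Longrightarrow> t0 \<le> 1 \<Longrightarrow>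
      dnorm (Y i) \<psi> > t0 * q \<Longrightarrow> dnorm UNIV (\<lambda>x. \<psi> x - P i \<psi> x) < \<epsilon> / 4"
  proof -
    fix i t0 and \<psi> :: "'a \<Rightarrow> real" assume h: "i \<in> I" "\<psi> \<in> dual_sp UNIV" "dnorm UNIV \<psi> \<le> t0" "t0 \<le> 1" "dnorm (Y i) \<psi> > t0 * q"
    define t where "t = dnorm UNIV \<psi>"
    have bU: "bnd UNIV \<psi>" using bnd_dual[OF h(2)] by simp
    have bY: "bnd (Y i) \<psi>" using bnd_dual[OF h(2)] by simp
    have tY: "dnorm (Y i) \<psi> \<le> t" unfolding t_def using dnorm_subset[OF bU _ Y0[OF h(1)]] by simp
    have t0pos: "0 \<le> t0" using h(3) dnorm_nonneg[OF bU] by simp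
    have "0 \<le> t0 * q" using t0pos q by simp
    then have tpos: "t > 0" using tY h(5) by linarith
    have tt0: "t \<le> t0" using h(3) t_def by simp
    define \<phi>1 where "\<phi>1 = (\<lambda>x. (1/t) * \<psi> x)"
    have \<phi>1: "\<phi>1 \<in> dual_sp UNIV" unfolding \<phi>1_def using dual_scale[OF h(2)] .
    have n1: "dnorm UNIV \<phi>1 = 1" unfolding \<phi>1_def using dnorm_scale[OF bU, of "1/t"] tpos t_def by simp
    have P1: "P i \<phi>1 = (\<lambda>x. (1/t) * P i \<psi> x)" unfolding \<phi>1_def using Psc[OF h(1,2)] .
    have "dnorm (Y i) (\<lambda>x. \<phi>1 x + P i \<phi>1 x) = dnorm (Y i) (\<lambda>x. (2/t) * \<psi> x)"
    proof (rule dnorm_cong)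
      fix x assume "x \<in> Y i"
      then show "\<phi>1 x + P i \<phi>1 x = (2/t) * \<psi> x" unfolding P1 by (simp add: \<phi>1_def PY[OF h(1,2)])
    qed
    also have "\<dots> = (2/t) * dnorm (Y i) \<psi>" using dnorm_scale[OF bY Y0[OF h(1)], of "2/t"] tpos by simp
    finally have e1: "dnorm (Y i) (\<lambda>x. \<phi>1 x + P i \<phi>1 x) = (2/t) * dnorm (Y i) \<psi>" .
    have "(2/t) * dnorm (Y i) \<psi> > (2/t) * (t0 * q)" using h(5) tpos by (intro mult_strict_left_mono) auto
    moreover have "(2/t) * (t0 * q) \<ge> 2 * q"
    proof -
      have "t0 / t \<ge> 1" using tt0 tpos by simp
      then have "(t0 / t) * (2 * q) \<ge> 1 * (2 * q)" using q by (intro mult_right_mono) auto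
      moreover have "(2/t) * (t0 * q) = (t0 / t) * (2 * q)" by simp
      ultimately show ?thesis by (simp add: mult.assoc mult.left_commute)
    qed
    ultimately have "dnorm (Y i) (\<lambda>x. \<phi>1 x + P i \<phi>1 x) > 2 - \<delta>"
      using e1 q_def \<delta>0 by linarith
    moreover have "dnorm (Y i) (\<lambda>x. \<phi>1 x + P i \<phi>1 x) \<le> dnorm UNIV (\<lambda>x. \<phi>1 x + P i \<phi>1 x)"
      using dnorm_subset[OF bnd_dual[OF dual_add[OF \<phi>1 Pdual[OF h(1) \<phi>1]]] _ Y0[OF h(1)]] by simp
    ultimately have "dnorm UNIV (\<lambda>x. \<phi>1 x + P i \<phi>1 x) > 2 - \<delta>" by linarith
    then have lt: "dnorm UNIV (\<lambda>x. \<phi>1 x - P i \<phi>1 x) < \<epsilon> / 4" using Pst h(1) \<phi>1 n1 by blast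
    have "dnorm UNIV (\<lambda>x. \<phi>1 x - P i \<phi>1 x) = dnorm UNIV (\<lambda>x. (1/t) * (\<psi> x - P i \<psi> x))"
    proof (rule dnorm_cong)
      fix x :: 'a
      show "\<phi>1 x - P i \<phi>1 x = (1/t) * (\<psi> x - P i \<psi> x)" unfolding P1 by (simp add: \<phi>1_def algebra_simps)
    qed
    also have "\<dots> = (1/t) * dnorm UNIV (\<lambda>x. \<psi> x - P i \<psi> x)"
      using dnorm_scale[OF bnd_dual[OF dual_diff[OF h(2) Pdual[OF h(1,2)]]], of UNIV "1/t"] tpos by simp
    finally have "(1/t) * dnorm UNIV (\<lambda>x. \<psi> x - P i \<psi> x) < \<epsilon> / 4" using lt by simp
    then have "dnorm UNIV (\<lambda>x. \<psi> x - P i \<psi> x) < t * (\<epsilon> / 4)" using tpos by (simp add: field_simps)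
    also have "t * (\<epsilon> / 4) \<le> \<epsilon> / 4" using tt0 h(4) \<epsilon> by (simp add: mult_le_cancel_right1)
    finally show "dnorm UNIV (\<lambda>x. \<psi> x - P i \<psi> x) < \<epsilon> / 4" .
  qed
  have hbP: "\<And>i (ch::'a\<Rightarrow>real). i \<in> I \<Longrightarrow> ch \<in> dual_sp UNIV \<Longrightarrow> dnorm UNIV (P i ch) \<le> dnorm (Y i) ch"
  proof -
    fix i and ch :: "'a \<Rightarrow> real" assume h: "i \<in> I" "ch \<in> dual_sp UNIV"
    define C where "C = dnorm (Y i) ch"
    have C0: "C \<ge> 0" unfolding C_def using dnorm_nonneg[OF bnd_dual[OF h(2)] Y0[OF h(1)]] by simp
    have bd: "\<forall>x\<in>Y i. \<bar>ch x\<bar> \<le> C * norm x"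
      unfolding C_def using dnorm_bound[OF bnd_dual[OF h(2)] Ysub[OF h(1)]] dual_hom[OF h(2)] by blast
    obtain F where F: "\<forall>x y. F (x + y) = F x + F y" "\<forall>c x. F (c *\<^sub>R x) = c * F x"
      "\<forall>x\<in>Y i. F x = ch x" "\<forall>x. \<bar>F x\<bar> \<le> C * norm x"
      using HB_ext[OF Ysub[OF h(1)], of ch C] dual_addD[OF h(2)] dual_hom[OF h(2)] bd C0 by blast
    have Fd: "F \<in> dual_sp UNIV" unfolding dual_sp_def using F by blast
    have "P i (\<lambda>x. ch x - F x) = (\<lambda>x. 0)"
      using Pperp[OF h(1) dual_diff[OF h(2) Fd]] F(3) by simp
    then have "(\<lambda>x. P i ch x - P i F x) = (\<lambda>x. 0)" using Pdiff[OF h(1,2) Fd] by simp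
    then have "P i ch = P i F" by (metis eq_iff_diff_eq_0 ext)
    then have "dnorm UNIV (P i ch) \<le> dnorm UNIV F" using Pnorm[OF h(1) Fd] by simp
    also have "dnorm UNIV F \<le> C"
    proof (rule dnorm_least)
      fix x :: 'a assume "norm x \<le> 1"
      then show "\<bar>F x\<bar> \<le> C" using F(4)[rule_format, of x] C0
        by (meson mult_left_le order_trans)
    qed simp
    finally show "dnorm UNIV (P i ch) \<le> dnorm (Y i) ch" unfolding C_def .
  qed
  have key: "\<And>i (\<psi>1::'a\<Rightarrow>real) \<psi>2 t0. i \<in> I \<Longrightarrow> \<psi>1 \<in> dual_sp UNIV \<Longrightarrow> \<psi>2 \<in> dual_sp UNIV \<Longrightarrow>
      dnorm UNIV \<psi>1 \<le> t0 \<Longrightarrow> dnorm UNIV \<psi>2 \<le> t0 \<Longrightarrow> t0 \<le> 1 \<Longrightarrow>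
      dnorm (Y i) \<psi>1 > t0 * q \<Longrightarrow> dnorm (Y i) \<psi>2 > t0 * q \<Longrightarrow>
      dnorm UNIV (\<lambda>x. \<psi>1 x - \<psi>2 x) < dnorm (Y i) (\<lambda>x. \<psi>1 x - \<psi>2 x) + \<epsilon> / 2"
  proof -
    fix i t0 and \<psi>1 \<psi>2 :: "'a \<Rightarrow> real" assume h: "i \<in> I" "\<psi>1 \<in> dual_sp UNIV" "\<psi>2 \<in> dual_sp UNIV"
      "dnorm UNIV \<psi>1 \<le> t0" "dnorm UNIV \<psi>2 \<le> t0" "t0 \<le> 1"
      "dnorm (Y i) \<psi>1 > t0 * q" "dnorm (Y i) \<psi>2 > t0 * q"
    define a where "a = (\<lambda>x. \<psi>1 x - P i \<psi>1 x)"
    define b where "b = (\<lambda>x. \<psi>2 x - P i \<psi>2 x)"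
    define c where "c = (\<lambda>x. P i \<psi>1 x - P i \<psi>2 x)"
    have ad: "a \<in> dual_sp UNIV" unfolding a_def using dual_diff h Pdual by blast
    have bd: "b \<in> dual_sp UNIV" unfolding b_def using dual_diff h Pdual by blast
    have cd: "c \<in> dual_sp UNIV" unfolding c_def using dual_diff h Pdual by blast
    have "dnorm UNIV (\<lambda>x. \<psi>1 x - \<psi>2 x) = dnorm UNIV (\<lambda>x. (\<lambda>x. a x - b x) x + c x)"
      by (rule dnorm_cong) (simp add: a_def b_def c_def)
    also have "\<dots> \<le> dnorm UNIV (\<lambda>x. a x - b x) + dnorm UNIV c"
      by (rule dnorm_add) (auto intro: bnd_dual[OF dual_diff[OF ad bd]] bnd_dual[OF cd])
    also have "dnorm UNIV (\<lambda>x. a x - b x) \<le> dnorm UNIV a + dnorm UNIV b"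
      by (rule dnorm_diff) (use bnd_dual ad bd in auto)
    also have "dnorm UNIV a < \<epsilon> / 4" unfolding a_def using close h by blast
    also have "dnorm UNIV b < \<epsilon> / 4" unfolding b_def using close h by blast
    also have "dnorm UNIV c \<le> dnorm (Y i) (\<lambda>x. \<psi>1 x - \<psi>2 x)"
      unfolding c_def using hbP[OF h(1) dual_diff[OF h(2,3)]] Pdiff[OF h(1,2,3)] by simp
    finally show "dnorm UNIV (\<lambda>x. \<psi>1 x - \<psi>2 x) < dnorm (Y i) (\<lambda>x. \<psi>1 x - \<psi>2 x) + \<epsilon> / 2"
      by simp
  qed
  have \<epsilon>2: "\<epsilon> / 2 > 0" using \<epsilon> by simp
  define DY where "DY i = (SOME D. (\<forall>a\<in>Field (omega_pow \<alpha>). D a = dual_ball (Y i) \<inter>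
          (\<Inter>b\<in>{b. (b, a) \<in> omega_pow \<alpha> \<and> b \<noteq> a}. szlenk_deriv (Y i) (\<epsilon>/2) (D b)))
        \<and> dual_ball (Y i) \<inter> (\<Inter>b\<in>Field (omega_pow \<alpha>). szlenk_deriv (Y i) (\<epsilon>/2) (D b)) = {})" for i
  have DYboth: "(\<forall>a\<in>Field (omega_pow \<alpha>). DY i a = dual_ball (Y i) \<inter>
          (\<Inter>b\<in>{b. (b, a) \<in> omega_pow \<alpha> \<and> b \<noteq> a}. szlenk_deriv (Y i) (\<epsilon>/2) (DY i b)))
        \<and> dual_ball (Y i) \<inter> (\<Inter>b\<in>Field (omega_pow \<alpha>). szlenk_deriv (Y i) (\<epsilon>/2) (DY i b)) = {}"
    if "i \<in> I" for i
  proof -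
    have "szlenk_iter_empty (Y i) (\<epsilon>/2) (dual_ball (Y i)) (omega_pow \<alpha>)"
      using assms(4) that \<epsilon>2 unfolding szlenk_le_def by blast
    then show ?thesis unfolding szlenk_iter_empty_def DY_def by (rule someI_ex)
  qed
  have DYeq: "DY i g = dual_ball (Y i) \<inter>
          (\<Inter>b\<in>{b. (b, g) \<in> omega_pow \<alpha> \<and> b \<noteq> g}. szlenk_deriv (Y i) (\<epsilon>/2) (DY i b))"
    if "i \<in> I" "g \<in> Field (omega_pow \<alpha>)" for i g
    using conjunct1[OF DYboth[OF that(1)]] that(2) by (rule bspec)
  have DYfin: "dual_ball (Y i) \<inter> (\<Inter>b\<in>Field (omega_pow \<alpha>). szlenk_deriv (Y i) (\<epsilon>/2) (DY i b)) = {}"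
    if "i \<in> I" for i
    using conjunct2[OF DYboth[OF that(1)]] .
  define W where "W = omega_pow (ord_succ \<alpha>)"
  define E where "E f = {\<phi> \<in> dual_ball UNIV. dnorm UNIV \<phi> \<le> q ^ (f None)
      \<and> (\<forall>i\<in>I. dnorm (Y i) \<phi> > q ^ (f None) * q \<longrightarrow> res (Y i) \<phi> \<in> DY i (\<lambda>b. f (Some b)))}"
    for f :: "'b option \<Rightarrow> nat"
  have Emem: "\<phi> \<in> E f \<longleftrightarrow> \<phi> \<in> dual_sp UNIV \<and> dnorm UNIV \<phi> \<le> 1 \<and> dnorm UNIV \<phi> \<le> q ^ (f None)
      \<and> (\<forall>i\<in>I. dnorm (Y i) \<phi> > q ^ (f None) * q \<longrightarrow> res (Y i) \<phi> \<in> DY i (\<lambda>b. f (Some b)))" for \<phi> f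
    unfolding E_def dual_ball_iff by blast
  have qpow: "q ^ n \<le> 1" for n using q by (simp add: power_le_one)
  have resball: "res (Y i) \<phi> \<in> dual_ball (Y i)" if "i \<in> I" "\<phi> \<in> dual_ball UNIV" for i \<phi>
  proof -
    have \<phi>: "\<phi> \<in> dual_sp UNIV" "dnorm UNIV \<phi> \<le> 1" using that(2) dual_ball_iff by blast+
    have "dnorm (Y i) (res (Y i) \<phi>) = dnorm (Y i) \<phi>" by (rule dnorm_res)
    also have "\<dots> \<le> dnorm UNIV \<phi>" using dnorm_subset[OF bnd_dual[OF \<phi>(1)] _ Y0[OF that(1)]] by simp
    finally show ?thesis unfolding dual_ball_iff using res_dual[OF \<phi>(1) Ysub[OF that(1)]] \<phi>(2) by simp
  qed
  have transfer: "res (Y i) \<phi> \<in> szlenk_deriv (Y i) (\<epsilon>/2) (DY i (\<lambda>b. h (Some b)))"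
    if h: "i \<in> I" "\<phi> \<in> szlenk_deriv UNIV \<epsilon> (E h)" "dnorm (Y i) \<phi> > q ^ (h None) * q" for i \<phi> h
  proof -
    let ?c = "q ^ (h None) * q"
    let ?D = "DY i (\<lambda>b. h (Some b))"
    have \<phi>E: "\<phi> \<in> E h" using h(2) sd_sub by blast
    then have \<phi>d: "\<phi> \<in> dual_sp UNIV" using Emem by blast
    have r\<phi>: "res (Y i) \<phi> \<in> ?D" using \<phi>E h(1,3) Emem by blast
    have "\<exists>g\<in>V \<inter> ?D. \<exists>g'\<in>V \<inter> ?D. dnorm (Y i) (\<lambda>x. g x - g' x) > \<epsilon>/2"
      if VU: "openin (weak_star (Y i)) U" "res (Y i) \<phi> \<in> U" "U \<subseteq> V" for V U
    proof -
      obtain y0 where y0: "y0 \<in> Y i" "norm y0 \<le> 1" "\<bar>\<phi> y0\<bar> > ?c"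
        using dnorm_gt[OF bnd_dual[OF \<phi>d] Y0[OF h(1)] h(3)] by blast
      define U' where "U' = {\<psi>. res (Y i) \<psi> \<in> U} \<inter> {\<psi>. \<psi> y0 \<in> {s. ?c < \<bar>s\<bar>}}"
      have op: "open {s::real. ?c < \<bar>s\<bar>}" by (intro open_Collect_less continuous_intros)
      have o2: "openin (weak_star UNIV) {\<psi>. \<psi> y0 \<in> {s. ?c < \<bar>s\<bar>}}"
        by (rule ws_basic[OF _ op]) simp
      have oU': "openin (weak_star UNIV) U'" unfolding U'_def
        by (rule openin_Int[OF ws_res[OF VU(1)] o2])
      have \<phi>U': "\<phi> \<in> U'" unfolding U'_def using VU(2) y0(3) by simp
      obtain \<psi>1 \<psi>2 where \<psi>: "\<psi>1 \<in> U' \<inter> E h" "\<psi>2 \<in> U' \<inter> E h" "dnorm UNIV (\<lambda>x. \<psi>1 x - \<psi>2 x) > \<epsilon>"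
        using h(2) oU' \<phi>U' unfolding szlenk_deriv_def by blast
      have props: "\<psi> \<in> dual_sp UNIV \<and> dnorm UNIV \<psi> \<le> q ^ (h None) \<and> dnorm (Y i) \<psi> > ?c
          \<and> res (Y i) \<psi> \<in> V \<inter> ?D" if "\<psi> \<in> U' \<inter> E h" for \<psi>
      proof -
        have \<psi>E: "\<psi> \<in> dual_sp UNIV" "dnorm UNIV \<psi> \<le> q ^ (h None)"
          "\<forall>j\<in>I. dnorm (Y j) \<psi> > ?c \<longrightarrow> res (Y j) \<psi> \<in> DY j (\<lambda>b. h (Some b))" using that Emem by blast+
        have "\<bar>\<psi> y0\<bar> > ?c" using that U'_def by simp
        moreover have "\<bar>\<psi> y0\<bar> \<le> dnorm (Y i) \<psi>" using dnorm_upper[OF bnd_dual[OF \<psi>E(1)] y0(1,2)] by simp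
        ultimately have gt: "dnorm (Y i) \<psi> > ?c" by linarith
        have "res (Y i) \<psi> \<in> U" using that U'_def by simp
        then show ?thesis using \<psi>E gt h(1) VU(3) by blast
      qed
      have p1: "\<psi>1 \<in> dual_sp UNIV" "dnorm UNIV \<psi>1 \<le> q ^ (h None)" "dnorm (Y i) \<psi>1 > ?c" "res (Y i) \<psi>1 \<in> V \<inter> ?D"
        using props[OF \<psi>(1)] by blast+
      have p2: "\<psi>2 \<in> dual_sp UNIV" "dnorm UNIV \<psi>2 \<le> q ^ (h None)" "dnorm (Y i) \<psi>2 > ?c" "res (Y i) \<psi>2 \<in> V \<inter> ?D"
        using props[OF \<psi>(2)] by blast+
      have "dnorm UNIV (\<lambda>x. \<psi>1 x - \<psi>2 x) < dnorm (Y i) (\<lambda>x. \<psi>1 x - \<psi>2 x) + \<epsilon> / 2"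
        using key[OF h(1) p1(1) p2(1) p1(2) p2(2) qpow p1(3) p2(3)] .
      then have "dnorm (Y i) (\<lambda>x. \<psi>1 x - \<psi>2 x) > \<epsilon>/2" using \<psi>(3) by linarith
      moreover have "dnorm (Y i) (\<lambda>x. res (Y i) \<psi>1 x - res (Y i) \<psi>2 x) = dnorm (Y i) (\<lambda>x. \<psi>1 x - \<psi>2 x)"
        by (rule dnorm_cong) (simp add: res_def)
      ultimately have "\<epsilon>/2 < dnorm (Y i) (\<lambda>x. res (Y i) \<psi>1 x - res (Y i) \<psi>2 x)" by simp
      then show ?thesis using p1(4) p2(4) by (intro bexI[of _ "res (Y i) \<psi>1"] bexI[of _ "res (Y i) \<psi>2"])
    qed
    then show ?thesis unfolding szlenk_deriv_def using r\<phi> by blast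
  qed
  have pre: "\<forall>f\<in>Field W. dual_ball UNIV \<inter> (\<Inter>h\<in>{h. (h, f) \<in> W \<and> h \<noteq> f}. szlenk_deriv UNIV \<epsilon> (E h)) \<subseteq> E f"
  proof (intro ballI subsetI)
    fix f \<phi> assume fW: "f \<in> Field W" and \<phi>in: "\<phi> \<in> dual_ball UNIV \<inter> (\<Inter>h\<in>{h. (h, f) \<in> W \<and> h \<noteq> f}. szlenk_deriv UNIV \<epsilon> (E h))"
    have \<phi>B: "\<phi> \<in> dual_ball UNIV" using \<phi>in by blast
    have \<phi>s: "\<phi> \<in> szlenk_deriv UNIV \<epsilon> (E h)" if "(h, f) \<in> W" "h \<noteq> f" for h using \<phi>in that by blast
    have \<phi>d: "\<phi> \<in> dual_sp UNIV" "dnorm UNIV \<phi> \<le> 1" using \<phi>B dual_ball_iff by blast+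
    define n where "n = f None"
    define g where "g = (\<lambda>b. f (Some b))"
    have gF: "g \<in> Field (omega_pow \<alpha>)" unfolding g_def using low_field fW W_def by blast
    have fmk: "f = mk n g" unfolding n_def g_def using mk_low by metis
    have part1: "dnorm UNIV \<phi> \<le> q ^ n"
    proof (cases n)
      case 0 then show ?thesis using \<phi>d by simp
    next
      case (Suc m)
      show ?thesis
      proof (rule density[OF \<phi>d(1) _ assms(5)])
        show "\<forall>i\<in>I. subspace (Y i)" using Ysub by blast
        show "\<forall>i\<in>I. dnorm (Y i) \<phi> \<le> q ^ n"
        proof (rule ballI, rule ccontr)
          fix i assume i: "i \<in> I" and "\<not> dnorm (Y i) \<phi> \<le> q ^ n"
          then have gt: "dnorm (Y i) \<phi> > q ^ m * q" using Suc by (simp add: mult.commute)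
          have "res (Y i) \<phi> \<in> szlenk_deriv (Y i) (\<epsilon>/2) (DY i g')" if "g' \<in> Field (omega_pow \<alpha>)" for g'
          proof -
            have "(mk m g', mk n g) \<in> W \<and> mk m g' \<noteq> mk n g"
              unfolding W_def using mk_less_top[OF gF that] Suc by simp
            then have "\<phi> \<in> szlenk_deriv UNIV \<epsilon> (E (mk m g'))" using \<phi>s fmk by metis
            from transfer[OF i this] gt show ?thesis by simp
          qed
          then have "res (Y i) \<phi> \<in> dual_ball (Y i) \<inter> (\<Inter>b\<in>Field (omega_pow \<alpha>). szlenk_deriv (Y i) (\<epsilon>/2) (DY i b))"
            using resball[OF i \<phi>B] by blast
          then show False using DYfin[OF i] by blast
        qed
      qed
    qed
    have part2: "\<forall>i\<in>I. dnorm (Y i) \<phi> > q ^ n * q \<longrightarrow> res (Y i) \<phi> \<in> DY i g"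
    proof (intro ballI impI)
      fix i assume i: "i \<in> I" and gt: "dnorm (Y i) \<phi> > q ^ n * q"
      have "res (Y i) \<phi> \<in> szlenk_deriv (Y i) (\<epsilon>/2) (DY i g')" if "(g', g) \<in> omega_pow \<alpha>" "g' \<noteq> g" for g'
      proof -
        have "(mk n g', mk n g) \<in> W \<and> mk n g' \<noteq> mk n g"
          unfolding W_def using mk_less_low[OF that] by simp
        then have "\<phi> \<in> szlenk_deriv UNIV \<epsilon> (E (mk n g'))" using \<phi>s fmk by metis
        from transfer[OF i this] gt show ?thesis by simp
      qed
      then have "res (Y i) \<phi> \<in> dual_ball (Y i) \<inter>
          (\<Inter>b\<in>{b. (b, g) \<in> omega_pow \<alpha> \<and> b \<noteq> g}. szlenk_deriv (Y i) (\<epsilon>/2) (DY i b))"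
        using resball[OF i \<phi>B] by blast
      then show "res (Y i) \<phi> \<in> DY i g" using DYeq[OF i gF] by simp
    qed
    show "\<phi> \<in> E f" unfolding Emem using \<phi>d part1 part2 n_def g_def by simp
  qed
  have fin: "dual_ball UNIV \<inter> (\<Inter>f\<in>Field W. szlenk_deriv UNIV \<epsilon> (E f)) = {}"
  proof -
    obtain N where N: "q ^ N < \<epsilon> / 2" using real_arch_pow_inv[OF \<epsilon>2 q(2)] by blast
    define z where "z = (\<lambda>b::'b. 0::nat)"
    have zF: "z \<in> Field (omega_pow \<alpha>)" unfolding z_def by (rule omega_fieldI) auto
    have f0: "mk N z \<in> Field W" unfolding W_def by (rule mk_field[OF zF])
    have "szlenk_deriv UNIV \<epsilon> (E (mk N z)) = {}"
    proof (rule ccontr)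
      assume "szlenk_deriv UNIV \<epsilon> (E (mk N z)) \<noteq> {}"
      then obtain \<phi> where \<phi>: "\<phi> \<in> szlenk_deriv UNIV \<epsilon> (E (mk N z))" by blast
      have "openin (weak_star UNIV) {g::'a \<Rightarrow> real. g 0 \<in> UNIV}" by (rule ws_basic) auto
      then have "openin (weak_star UNIV) (UNIV :: ('a \<Rightarrow> real) set)" by simp
      then obtain g1 g2 where g: "g1 \<in> E (mk N z)" "g2 \<in> E (mk N z)" "dnorm UNIV (\<lambda>x. g1 x - g2 x) > \<epsilon>"
        using \<phi> unfolding szlenk_deriv_def by blast
      have g1: "g1 \<in> dual_sp UNIV" "dnorm UNIV g1 \<le> q ^ N" using g(1) Emem by auto
      have g2: "g2 \<in> dual_sp UNIV" "dnorm UNIV g2 \<le> q ^ N" using g(2) Emem by auto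
      have "dnorm UNIV (\<lambda>x. g1 x - g2 x) \<le> dnorm UNIV g1 + dnorm UNIV g2"
        by (rule dnorm_diff) (auto intro: bnd_dual[OF g1(1)] bnd_dual[OF g2(1)])
      then show False using g(3) g1(2) g2(2) N by linarith
    qed
    then show ?thesis using f0 by blast
  qed
  show "szlenk_iter_empty (UNIV :: 'a set) \<epsilon> (dual_ball UNIV) (omega_pow (ord_succ \<alpha>))"
    using iter_prefixed[OF pre fin] unfolding W_def by simp
qed

end
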